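(* Let $k\ge2$ be the cache size and $N\ge k+1$. For the star access graph $S_N$ on $N$ vertices, \[-\frac12+\frac1{2(k-1)}\le\mathrm{Min}^{S_N}(\mathrm{FIFO},\mathrm{LRU})\le-\frac12+\frac1{2(k-1)}+\frac1{2k(k-1)}.\]
   Context: Paging: a cache holds at most $k$ pages and is initially empty. A request to a page in the cache is a hit; otherwise it is a fault, the page is brought into the cache, evicting a page first if the cache is full. $\mathcal{A}(I)$ is the number of faults of $\mathcal{A}$ on request sequence $I$. LRU evicts the least recently requested cached page; FIFO evicts the cached page that entered the cache earliest. The star $S_N$ has a central vertex adjacent to $N-1$ leaves, with no other edges. Access graph: a graph $G$ whose vertices are the pages; a request sequence respects $G$ if any two consecutive requests are identical or adjacent in $G$; $L(G)$ is the set of such sequences. $\mathrm{Min}_{\mathcal{A},\mathcal{B}}(n,G)=\min\{\mathcal{A}(I)-\mathcal{B}(I): I\in L(G),|I|=n\}$ and $\mathrm{Min}^G(\mathcal{A},\mathcal{B})=\liminf_{n\to\infty}\mathrm{Min}_{\mathcal{A},\mathcal{B}}(n,G)/n$. *)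

theory Defs
  imports "HOL-Analysis.Analysis"
begin

text \<open>For LRU the list is ordered by recency of request (most recent first); for FIFO it is
ordered by time of entry into the cache (newest first).\<close>

fun lru_faults :: "nat \<Rightarrow> 'a list \<Rightarrow> 'a list \<Rightarrow> nat" where
  "lru_faults k c [] = 0"
| "lru_faults k c (p # ps) =
     (if p \<in> set c then lru_faults k (p # removeAll p c) ps
      else Suc (lru_faults k (p # (if length c \<ge> k then butlast c else c)) ps))"

fun fifo_faults :: "nat \<Rightarrow> 'a list \<Rightarrow> 'a list \<Rightarrow> nat" where
  "fifo_faults k c [] = 0"
| "fifo_faults k c (p # ps) =
     (if p \<in> set c then fifo_faults k c ps
      else Suc (fifo_faults k (p # (if length c \<ge> k then butlast c else c)) ps))"

definition LRU :: "nat \<Rightarrow> 'a list \<Rightarrow> nat" where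
  "LRU k I = lru_faults k [] I"

definition FIFO :: "nat \<Rightarrow> 'a list \<Rightarrow> nat" where
  "FIFO k I = fifo_faults k [] I"

definition in_LG :: "'a set \<Rightarrow> ('a \<Rightarrow> 'a \<Rightarrow> bool) \<Rightarrow> 'a list \<Rightarrow> bool" where
  "in_LG V E I \<longleftrightarrow> set I \<subseteq> V \<and>
     (\<forall>i. Suc i < length I \<longrightarrow> I ! i = I ! (Suc i) \<or> E (I ! i) (I ! (Suc i)))"

definition star_V :: "nat \<Rightarrow> nat set" where
  "star_V N = {..<N}"

definition star_E :: "nat \<Rightarrow> nat \<Rightarrow> bool" where
  "star_E u v \<longleftrightarrow> (u = 0 \<and> v \<noteq> 0) \<or> (v = 0 \<and> u \<noteq> 0)"

definition Min_diff :: "('a list \<Rightarrow> nat) \<Rightarrow> ('a list \<Rightarrow> nat) \<Rightarrow> 'a set \<Rightarrow> ('a \<Rightarrow> 'a \<Rightarrow> bool)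
    \<Rightarrow> nat \<Rightarrow> int" where
  "Min_diff A B V E n = Min {int (A I) - int (B I) | I. in_LG V E I \<and> length I = n}"

definition Min_ratio :: "('a list \<Rightarrow> nat) \<Rightarrow> ('a list \<Rightarrow> nat) \<Rightarrow> 'a set \<Rightarrow> ('a \<Rightarrow> 'a \<Rightarrow> bool)
    \<Rightarrow> ereal" where
  "Min_ratio A B V E = liminf (\<lambda>n. ereal (real_of_int (Min_diff A B V E n) / real n))"

end

theory Submission
  imports Defs
begin


definition lstep :: "nat \<Rightarrow> 'a list \<Rightarrow> 'a \<Rightarrow> 'a list" where
  "lstep k c p = (if p \<in> set c then p # removeAll p c
                  else p # (if length c \<ge> k then butlast c else c))"

definition fstep :: "nat \<Rightarrow> 'a list \<Rightarrow> 'a \<Rightarrow> 'a list" where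
  "fstep k c p = (if p \<in> set c then c
                  else p # (if length c \<ge> k then butlast c else c))"

lemma lru_Cons: "lru_faults k c (p#ps) = (if p \<in> set c then 0 else 1) + lru_faults k (lstep k c p) ps"
  by (simp add: lstep_def)

lemma fifo_Cons: "fifo_faults k c (p#ps) = (if p \<in> set c then 0 else 1) + fifo_faults k (fstep k c p) ps"
  by (simp add: fstep_def)

fun okseq :: "nat \<Rightarrow> nat list \<Rightarrow> bool" where
  "okseq q [] = True"
| "okseq q (p # ps) = ((p = q \<or> star_E q p) \<and> okseq p ps)"

lemma in_LG_Cons2:
  assumes "in_LG V E (x # y # zs)"
  shows "(x = y \<or> E x y) \<and> in_LG V E (y # zs)"
proof -
  have 1: "x = y \<or> E x y"
  proof -
    have "\<forall>i. Suc i < length (x # y # zs) \<longrightarrow>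
        (x # y # zs) ! i = (x # y # zs) ! Suc i \<or> E ((x # y # zs) ! i) ((x # y # zs) ! Suc i)"
      using assms unfolding in_LG_def by blast
    from this[rule_format, of 0] show ?thesis by simp
  qed
  have 2: "in_LG V E (y # zs)" using assms unfolding in_LG_def
  proof (intro conjI allI impI)
    assume a: "set (x # y # zs) \<subseteq> V \<and>
      (\<forall>i. Suc i < length (x # y # zs) \<longrightarrow>
        (x # y # zs) ! i = (x # y # zs) ! Suc i \<or> E ((x # y # zs) ! i) ((x # y # zs) ! Suc i))"
    show "set (y # zs) \<subseteq> V" using a by auto
    fix i assume "Suc i < length (y # zs)"
    then have "Suc (Suc i) < length (x # y # zs)" by simp
    then show "(y # zs) ! i = (y # zs) ! Suc i \<or> E ((y # zs) ! i) ((y # zs) ! Suc i)"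
      using a[THEN conjunct2, rule_format, of "Suc i"] by simp
  qed
  show ?thesis using 1 2 by blast
qed

lemma in_LG_okseq: "in_LG (star_V N) star_E (p # ps) \<Longrightarrow> okseq p ps"
proof (induction ps arbitrary: p)
  case Nil then show ?case by simp
next
  case (Cons y zs)
  from in_LG_Cons2[OF Cons.prems] Cons.IH show ?case by auto
qed

definition inv0 :: "nat \<Rightarrow> nat list \<Rightarrow> bool \<Rightarrow> bool" where
  "inv0 k c z \<longleftrightarrow> c \<noteq> [] \<and> distinct c \<and> length c \<le> k \<and> (z \<longrightarrow> 0 \<in> set (take 2 c))"

lemma lstep_hd: "hd (lstep k c p) = p" by (simp add: lstep_def)

lemma lstep_distinct: "distinct c \<Longrightarrow> distinct (lstep k c p)"
  by (auto simp: lstep_def distinct_removeAll distinct_butlast dest: in_set_butlastD)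

lemma lstep_length: "distinct c \<Longrightarrow> length c \<le> k \<Longrightarrow> 0 < k \<Longrightarrow> length (lstep k c p) \<le> k"
proof -
  assume d: "distinct c" and l: "length c \<le> k" and k: "0 < k"
  show ?thesis
  proof (cases "p \<in> set c")
    case True
    then have "length (removeAll p c) = length c - 1"
      using d by (simp add: distinct_remove1_removeAll[symmetric] length_remove1)
    moreover have "length c > 0" using True by (cases c) auto
    ultimately have "length (p # removeAll p c) \<le> k" using l by simp
    then show ?thesis using True by (simp add: lstep_def)
  next
    case False
    show ?thesis
    proof (cases "length c \<ge> k")
      case True
      then have "length (p # butlast c) \<le> k" using l k by simp
      then show ?thesis using False True by (simp add: lstep_def)
    next
      case F2: False
      then have "length (p # c) \<le> k" by simp
      then show ?thesis using False F2 by (simp add: lstep_def)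
    qed
  qed
qed

lemma inv0_step:
  assumes "inv0 k c z" "2 \<le> k" "p = hd c \<or> star_E (hd c) p"
  shows "inv0 k (lstep k c p) (z \<or> p = 0)"
proof -
  have c: "c \<noteq> []" "distinct c" "length c \<le> k" and zz: "z \<longrightarrow> 0 \<in> set (take 2 c)"
    using assms(1) unfolding inv0_def by auto
  have z2: "0 \<in> set (take 2 (lstep k c p))" if "z \<or> p = 0"
  proof (cases "p = 0")
    case True then show ?thesis by (simp add: lstep_def)
  next
    case False
    then have z: z using that by simp
    obtain q c' where cq: "c = q # c'" using c(1) by (cases c) auto
    show ?thesis
    proof (cases "p = q")
      case True
      have "removeAll q c' = c'" using c(2) cq by simp
      then have "lstep k c p = c" using True cq by (simp add: lstep_def)
      then show ?thesis using zz z by simp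
    next
      case False
      then have "q = 0" using assms(3) cq \<open>p \<noteq> 0\<close> by (auto simp: star_E_def)
      show ?thesis
      proof (cases "p \<in> set c")
        case True
        then show ?thesis using cq \<open>q = 0\<close> \<open>p \<noteq> 0\<close> by (simp add: lstep_def)
      next
        case nin: False
        show ?thesis
        proof (cases "length c \<ge> k")
          case True
          then have "c' \<noteq> []" using cq assms(2) by auto
          then have "butlast c = 0 # butlast c'" using cq \<open>q = 0\<close> by simp
          then show ?thesis using nin True by (simp add: lstep_def)
        next
          case False
          then show ?thesis using nin cq \<open>q = 0\<close> by (simp add: lstep_def)
        qed
      qed
    qed
  qed
  have ne: "lstep k c p \<noteq> []" by (simp add: lstep_def)
  have k0: "0 < k" using assms(2) by simp
  show ?thesis unfolding inv0_def
  proof (intro conjI impI)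
    show "lstep k c p \<noteq> []" by (rule ne)
    show "distinct (lstep k c p)" by (rule lstep_distinct[OF c(2)])
    show "length (lstep k c p) \<le> k" by (rule lstep_length[OF c(2) c(3) k0])
    show "0 \<in> set (take 2 (lstep k c p))" if "z \<or> p = 0" using z2 that by blast
  qed
qed



lemma countB:
  assumes "inv0 k c z" "2 \<le> k" "okseq (hd c) ps"
  shows "2 * lru_faults k c ps \<le> length ps + (if hd c = 0 then 1 else 0) + (if z then 0 else 2)"
  using assms
proof (induction ps arbitrary: c z)
  case Nil then show ?case by simp
next
  case (Cons p ps)
  have ok: "p = hd c \<or> star_E (hd c) p" "okseq p ps" using Cons.prems(3) by auto
  have i0: "inv0 k c z" using Cons.prems(1) .
  have c: "c \<noteq> []" "z \<longrightarrow> 0 \<in> set (take 2 c)" using i0 unfolding inv0_def by auto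
  have inv': "inv0 k (lstep k c p) (z \<or> p = 0)" by (rule inv0_step[OF i0 Cons.prems(2) ok(1)])
  have hd': "hd (lstep k c p) = p" by (rule lstep_hd)
  have IH: "2 * lru_faults k (lstep k c p) ps \<le> length ps + (if p = 0 then 1 else 0) + (if z \<or> p = 0 then 0 else 2)"
    using Cons.IH[OF inv' Cons.prems(2)] ok(2) hd' by simp
  have eq: "lru_faults k c (p # ps) = (if p \<in> set c then 0 else 1) + lru_faults k (lstep k c p) ps"
    by (rule lru_Cons)
  show ?case
  proof (cases "p = hd c")
    case True
    then have "p \<in> set c" using c(1) by simp
    then show ?thesis using eq IH True by auto
  next
    case False
    then have se: "star_E (hd c) p" using ok(1) by simp
    show ?thesis
    proof (cases "p = 0")
      case True
      then have "hd c \<noteq> 0" using se by (simp add: star_E_def)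
      have "z \<Longrightarrow> p \<in> set c" using c(2) True by (meson in_set_takeD)
      then show ?thesis using eq IH True \<open>hd c \<noteq> 0\<close> by auto
    next
      case False
      then have "hd c = 0" using se by (simp add: star_E_def)
      then show ?thesis using eq IH False by auto
    qed
  qed
qed



definition inv1 :: "nat \<Rightarrow> nat list \<Rightarrow> nat list \<Rightarrow> nat list \<Rightarrow> bool \<Rightarrow> bool" where
  "inv1 k c f pre z \<longleftrightarrow> inv0 k c z \<and> length f \<le> k \<and> (\<exists>suf. c = pre @ suf) \<and> pre \<noteq> []
     \<and> set pre \<subseteq> set f \<and> (0 \<notin> set pre \<longrightarrow> set pre \<subseteq> {hd c})"

lemma fstep_length: "length f \<le> k \<Longrightarrow> 0 < k \<Longrightarrow> length (fstep k f p) \<le> k"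
proof -
  assume l: "length f \<le> k" and k: "0 < k"
  show ?thesis
  proof (cases "p \<in> set f")
    case True then show ?thesis using l by (simp add: fstep_def)
  next
    case False
    show ?thesis
    proof (cases "length f \<ge> k")
      case True
      then have "length (p # butlast f) \<le> k" using l k by simp
      then show ?thesis using False True by (simp add: fstep_def)
    next
      case F2: False
      then have "length (p # f) \<le> k" by simp
      then show ?thesis using False F2 by (simp add: fstep_def)
    qed
  qed
qed

lemma card_pre_bound:
  assumes "inv1 k c f pre z" "2 \<le> k"
  shows "card (set pre - {0}) \<le> k - 1"
proof (cases "0 \<in> set pre")
  case True
  have "card (set pre) \<le> card (set f)" using assms unfolding inv1_def by (simp add: card_mono)
  also have "\<dots> \<le> length f" by (rule card_length)
  also have "\<dots> \<le> k" using assms unfolding inv1_def by simp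
  finally have "card (set pre) \<le> k" .
  then show ?thesis using True by (simp add: card_Diff_singleton)
next
  case False
  then have "set pre \<subseteq> {hd c}" using assms unfolding inv1_def by simp
  then have "card (set pre - {0}) \<le> card {hd c}"
    by (meson Diff_subset card_mono finite.emptyI finite.insertI order_trans)
  moreover have "card {hd c} = 1" by simp
  ultimately show ?thesis using assms(2) by linarith
qed

definition npre :: "nat list \<Rightarrow> nat list \<Rightarrow> nat \<Rightarrow> nat list" where
  "npre f pre p = (if p \<notin> set f then [p] else if p \<in> set pre then p # removeAll p pre else p # pre)"

lemma inv1I: "inv0 k c z \<Longrightarrow> length f \<le> k \<Longrightarrow> (\<exists>suf. c = pre @ suf) \<Longrightarrow> pre \<noteq> []
  \<Longrightarrow> set pre \<subseteq> set f \<Longrightarrow> (0 \<notin> set pre \<longrightarrow> set pre \<subseteq> {hd c}) \<Longrightarrow> inv1 k c f pre z"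
  unfolding inv1_def by blast

lemma inv1_step:
  assumes "inv1 k c f pre z" "2 \<le> k" "p = hd c \<or> star_E (hd c) p"
  shows "inv1 k (lstep k c p) (fstep k f p) (npre f pre p) (z \<or> p = 0)"
proof -
  have i0: "inv0 k c z" and lf: "length f \<le> k" and pn: "pre \<noteq> []"
    and ps: "set pre \<subseteq> set f" and p0: "0 \<notin> set pre \<longrightarrow> set pre \<subseteq> {hd c}"
    using assms(1) unfolding inv1_def by auto
  obtain suf where cs: "c = pre @ suf" using assms(1) unfolding inv1_def by auto
  have c: "c \<noteq> []" "distinct c" "length c \<le> k" using i0 unfolding inv0_def by auto
  have hdc: "hd c = hd pre" using cs pn by simp
  have hdin: "hd c \<in> set pre" using hdc pn by simp
  have dpre: "distinct pre" using c(2) cs by simp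
  have dsuf: "set pre \<inter> set suf = {}" using c(2) cs by simp
  have A: "inv0 k (lstep k c p) (z \<or> p = 0)" by (rule inv0_step[OF i0 assms(2) assms(3)])
  have B: "length (fstep k f p) \<le> k" using fstep_length[OF lf] assms(2) by simp
  have hd': "hd (lstep k c p) = p" by (rule lstep_hd)
  show ?thesis
  proof (cases "p \<in> set f")
    case False
    have np: "npre f pre p = [p]" using False by (simp add: npre_def)
    obtain X where "lstep k c p = p # X" unfolding lstep_def by (cases "p \<in> set c") auto
    then have C1: "\<exists>suf. lstep k c p = npre f pre p @ suf" using np by simp
    have C2: "set (npre f pre p) \<subseteq> set (fstep k f p)" using False np by (simp add: fstep_def)
    show ?thesis by (rule inv1I[OF A B C1 _ C2]) (simp_all add: np hd')
  next
    case pf: True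
    have fs: "fstep k f p = f" using pf by (simp add: fstep_def)
    show ?thesis
    proof (cases "p \<in> set pre")
      case True
      have np: "npre f pre p = p # removeAll p pre" using True pf by (simp add: npre_def)
      have "p \<in> set c" using True cs by simp
      then have "lstep k c p = p # removeAll p pre @ removeAll p suf" using cs by (simp add: lstep_def)
      then have C1: "\<exists>suf. lstep k c p = npre f pre p @ suf" using np by simp
      have sn: "set (npre f pre p) = set pre" using np True by auto
      have C2: "set (npre f pre p) \<subseteq> set (fstep k f p)" using sn fs ps by simp
      have C3: "0 \<notin> set (npre f pre p) \<longrightarrow> set (npre f pre p) \<subseteq> {hd (lstep k c p)}"
        using sn p0 True hd' by auto
      show ?thesis by (rule inv1I[OF A B C1 _ C2 C3]) (simp add: np)
    next
      case False
      have np: "npre f pre p = p # pre" using False pf by (simp add: npre_def)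
      have C1: "\<exists>suf. lstep k c p = npre f pre p @ suf"
      proof (cases "p \<in> set c")
        case True
        have "removeAll p pre = pre" using False by simp
        then have "lstep k c p = p # pre @ removeAll p suf" using True cs by (simp add: lstep_def)
        then show ?thesis using np by simp
      next
        case nc: False
        show ?thesis
        proof (cases "length c \<ge> k")
          case True
          have "card (insert p (set pre)) \<le> card (set f)"
            using ps pf by (simp add: card_mono)
          also have "\<dots> \<le> length f" by (rule card_length)
          finally have "Suc (length pre) \<le> k"
            using False lf dpre by (simp add: distinct_card)
          then have "suf \<noteq> []" using True cs by auto
          then have "butlast c = pre @ butlast suf" using cs by (simp add: butlast_append)
          then have "lstep k c p = p # pre @ butlast suf" using nc True by (simp add: lstep_def)
          then show ?thesis using np by simp
        next
          case F2: False
          then have "lstep k c p = p # pre @ suf" using nc cs by (simp add: lstep_def)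
          then show ?thesis using np by simp
        qed
      qed
      have C2: "set (npre f pre p) \<subseteq> set (fstep k f p)" using np fs ps pf by simp
      have C3: "0 \<notin> set (npre f pre p) \<longrightarrow> set (npre f pre p) \<subseteq> {hd (lstep k c p)}"
      proof
        assume a: "0 \<notin> set (npre f pre p)"
        then have "p \<noteq> 0" "0 \<notin> set pre" using np by auto
        then have "set pre \<subseteq> {hd c}" using p0 by simp
        have "p \<noteq> hd c" using False hdin by auto
        then have "star_E (hd c) p" using assms(3) by simp
        then have "hd c = 0" using \<open>p \<noteq> 0\<close> by (simp add: star_E_def)
        then show "set (npre f pre p) \<subseteq> {hd (lstep k c p)}" using hdin \<open>0 \<notin> set pre\<close> by simp
      qed
      show ?thesis by (rule inv1I[OF A B C1 _ C2 C3]) (simp add: np)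
    qed
  qed
qed

lemma countA:
  assumes "inv1 k c f pre z" "2 \<le> k" "okseq (hd c) ps"
  shows "lru_faults k c ps + card (set pre - {0}) \<le> (k - 1) * fifo_faults k f ps + (k - 1) + (if z then 0 else 1)"
  using assms
proof (induction ps arbitrary: c f pre z)
  case Nil
  then show ?case using card_pre_bound[OF Nil.prems(1,2)] by simp
next
  case (Cons p ps)
  have ok: "p = hd c \<or> star_E (hd c) p" "okseq p ps" using Cons.prems(3) by auto
  have i1: "inv1 k c f pre z" by (rule Cons.prems(1))
  have k2: "2 \<le> k" by (rule Cons.prems(2))
  have inv': "inv1 k (lstep k c p) (fstep k f p) (npre f pre p) (z \<or> p = 0)"
    by (rule inv1_step[OF i1 k2 ok(1)])
  have hd': "hd (lstep k c p) = p" by (rule lstep_hd)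
  have IH: "lru_faults k (lstep k c p) ps + card (set (npre f pre p) - {0})
     \<le> (k - 1) * fifo_faults k (fstep k f p) ps + (k - 1) + (if z \<or> p = 0 then 0 else 1)"
    using Cons.IH[OF inv' k2] ok(2) hd' by simp
  have eqL: "lru_faults k c (p # ps) = (if p \<in> set c then 0 else 1) + lru_faults k (lstep k c p) ps"
    by (rule lru_Cons)
  have eqF: "fifo_faults k f (p # ps) = (if p \<in> set f then 0 else 1) + fifo_faults k (fstep k f p) ps"
    by (rule fifo_Cons)
  have a: "card (set pre - {0}) \<le> k - 1" by (rule card_pre_bound[OF i1 k2])
  obtain suf where cs: "c = pre @ suf" using i1 unfolding inv1_def by auto
  have psf: "set pre \<subseteq> set f" using i1 unfolding inv1_def by auto
  have zc: "z \<Longrightarrow> 0 \<in> set c" using i1 unfolding inv1_def inv0_def by (meson in_set_takeD)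
  define lf where "lf = (if p \<in> set c then 0 else 1::nat)"
  define L' where "L' = lru_faults k (lstep k c p) ps"
  define F' where "F' = fifo_faults k (fstep k f p) ps"
  define a0 where "a0 = card (set pre - {0})"
  define a1 where "a1 = card (set (npre f pre p) - {0})"
  have key: "lf + a0 + (if z \<or> p = 0 then 0 else 1) \<le> a1 + (k - 1) * (if p \<in> set f then 0 else 1) + (if z then 0 else 1)"
  proof (cases "p \<in> set f")
    case False
    have np: "npre f pre p = [p]" using False by (simp add: npre_def)
    show ?thesis
    proof (cases "p = 0")
      case True
      then have "lf \<le> (if z then 0 else 1)" using zc unfolding lf_def by auto
      then show ?thesis using False True a unfolding a0_def by simp
    next
      case p0: False
      have "a1 = 1" unfolding a1_def using np p0 by simp
      then show ?thesis using False p0 a unfolding a0_def lf_def by simp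
    qed
  next
    case pf: True
    show ?thesis
    proof (cases "p \<in> set pre")
      case True
      have np: "set (npre f pre p) = set pre" using True pf by (auto simp: npre_def)
      have "lf = 0" using True cs unfolding lf_def by simp
      then show ?thesis using np pf unfolding a0_def a1_def by simp
    next
      case False
      have np: "set (npre f pre p) = insert p (set pre)" using False pf by (simp add: npre_def)
      show ?thesis
      proof (cases "p = 0")
        case True
        have "a1 = a0" unfolding a1_def a0_def using np True by simp
        moreover have "lf \<le> (if z then 0 else 1)" using zc True unfolding lf_def by auto
        ultimately show ?thesis using pf True by simp
      next
        case p0: False
        have "insert p (set pre) - {0} = insert p (set pre - {0})" using p0 by auto
        then have "a1 = Suc a0" unfolding a1_def a0_def using np False by simp
        then show ?thesis using pf p0 unfolding lf_def by simp
      qed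
    qed
  qed
  have "lru_faults k c (p # ps) + card (set pre - {0}) = lf + L' + a0"
    unfolding eqL lf_def L'_def a0_def by simp
  also have "\<dots> \<le> (k - 1) * fifo_faults k f (p # ps) + (k - 1) + (if z then 0 else 1)"
  proof -
    have "fifo_faults k f (p # ps) = (if p \<in> set f then 0 else 1) + F'" unfolding eqF F'_def by simp
    then have "(k - 1) * fifo_faults k f (p # ps) = (k - 1) * (if p \<in> set f then 0 else 1) + (k - 1) * F'"
      by (simp add: distrib_left)
    moreover have "L' + a1 \<le> (k - 1) * F' + (k - 1) + (if z \<or> p = 0 then 0 else 1)"
      using IH unfolding L'_def a1_def F'_def .
    ultimately show ?thesis using key by linarith
  qed
  finally show ?case .
qed



lemma faults_bounds:
  assumes "in_LG (star_V N) star_E I" "2 \<le> k"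
  shows "LRU k I \<le> (k - 1) * FIFO k I + 2 \<and> 2 * LRU k I \<le> length I + 4"
proof (cases I)
  case Nil
  then show ?thesis by (simp add: LRU_def FIFO_def)
next
  case (Cons p ps)
  have ok: "okseq p ps" using assms(1) Cons in_LG_okseq by blast
  have L: "LRU k I = 1 + lru_faults k [p] ps" using Cons assms(2) by (simp add: LRU_def)
  have F: "FIFO k I = 1 + fifo_faults k [p] ps" using Cons assms(2) by (simp add: FIFO_def)
  have i0: "inv0 k [p] (p = 0)" using assms(2) unfolding inv0_def by simp
  have i1: "inv1 k [p] [p] [p] (p = 0)" using i0 assms(2) unfolding inv1_def by simp
  have a: "lru_faults k [p] ps + card (set [p] - {0}) \<le> (k - 1) * fifo_faults k [p] ps + (k - 1) + (if p = 0 then 0 else 1)"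
    using countA[OF i1 assms(2)] ok by simp
  have b: "2 * lru_faults k [p] ps \<le> length ps + (if p = 0 then 1 else 0) + (if p = 0 then 0 else 2)"
    using countB[OF i0 assms(2)] ok by simp
  have "LRU k I \<le> (k - 1) * FIFO k I + 2"
  proof -
    have "(k - 1) * FIFO k I = (k - 1) + (k - 1) * fifo_faults k [p] ps" unfolding F by (simp add: distrib_left)
    then show ?thesis using a L by (auto split: if_splits)
  qed
  moreover have "2 * LRU k I \<le> length I + 4" using b L Cons by (auto split: if_splits)
  ultimately show ?thesis by blast
qed

lemma finite_LG_set:
  assumes "finite V"
  shows "finite {int (A I) - int (B I) | I. in_LG V E I \<and> length I = n}"
proof -
  have "{int (A I) - int (B I) | I. in_LG V E I \<and> length I = n}
      \<subseteq> (\<lambda>I. int (A I) - int (B I)) ` {I. set I \<subseteq> V \<and> length I = n}"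
    unfolding in_LG_def by auto
  moreover have "finite {I. set I \<subseteq> V \<and> length I = n}" using finite_lists_length_eq[OF assms] .
  ultimately show ?thesis by (meson finite_imageI finite_subset)
qed

lemma replicate_LG: "0 < N \<Longrightarrow> in_LG (star_V N) star_E (replicate n 0)"
  unfolding in_LG_def star_V_def by auto

lemma Min_diff_lower:
  assumes "2 \<le> k" "0 < N"
  shows "real_of_int (Min_diff (FIFO k) (LRU k) (star_V N) star_E n) \<ge> (- 1/2 + 1 / (2 * (real k - 1))) * real n - 2"
proof -
  let ?S = "{int (FIFO k I) - int (LRU k I) | I. in_LG (star_V N) star_E I \<and> length I = n}"
  have fin: "finite ?S" using finite_LG_set[of "star_V N"] by (simp add: star_V_def)
  have ne: "?S \<noteq> {}" using replicate_LG[OF assms(2), of n] by auto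
  have "\<forall>x\<in>?S. real_of_int x \<ge> (- 1/2 + 1 / (2 * (real k - 1))) * real n - 2"
  proof
    fix x assume "x \<in> ?S"
    then obtain I where I: "in_LG (star_V N) star_E I" "length I = n" "x = int (FIFO k I) - int (LRU k I)" by blast
    have b: "LRU k I \<le> (k - 1) * FIFO k I + 2" "2 * LRU k I \<le> n + 4" using faults_bounds[OF I(1) assms(1)] I(2) by auto
    define m where "m = real k - 1"
    define Fr where "Fr = real (FIFO k I)"
    define Lr where "Lr = real (LRU k I)"
    have m1: "m \<ge> 1" using assms(1) unfolding m_def by simp
    have b1: "Lr \<le> m * Fr + 2"
    proof -
      have "real (LRU k I) \<le> real ((k - 1) * FIFO k I + 2)" using b(1) by (simp only: of_nat_le_iff)
      then show ?thesis using assms(1) unfolding Lr_def Fr_def m_def by (simp add: of_nat_diff)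
    qed
    have b2: "2 * Lr \<le> real n + 4"
    proof -
      have "real (2 * LRU k I) \<le> real (n + 4)" using b(2) by (simp only: of_nat_le_iff)
      then show ?thesis unfolding Lr_def by simp
    qed
    have "(m - 1) * (2 * Lr) \<le> (m - 1) * (real n + 4)" using b2 m1 by (intro mult_left_mono) auto
    then have "m * (Fr - Lr) \<ge> m * ((- 1/2 + 1 / (2 * m)) * real n - 2)"
      using b1 m1 by (simp add: algebra_simps)
    then have "Fr - Lr \<ge> (- 1/2 + 1 / (2 * m)) * real n - 2" using m1
      by (meson mult_le_cancel_left_pos zero_less_one less_le_trans)
    then show "real_of_int x \<ge> (- 1/2 + 1 / (2 * (real k - 1))) * real n - 2"
      using I(3) unfolding Fr_def Lr_def m_def by simp
  qed
  moreover have "Min ?S \<in> ?S" using fin ne by (rule Min_in)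
  ultimately show ?thesis unfolding Min_diff_def by blast
qed

lemma ratio_lower:
  assumes "2 \<le> k" "0 < N"
  shows "ereal (- 1/2 + 1 / (2 * (real k - 1))) \<le> Min_ratio (FIFO k) (LRU k) (star_V N) star_E"
proof -
  define A where "A = - 1/2 + 1 / (2 * (real k - 1))"
  have lim: "(\<lambda>n. ereal (A - 2 / real n)) \<longlonglongrightarrow> ereal A"
    by (intro tendsto_ereal tendsto_eq_intros lim_const_over_n) auto
  have "liminf (\<lambda>n. ereal (A - 2 / real n)) = ereal A"
    by (rule lim_imp_Liminf[OF _ lim]) simp
  moreover have "liminf (\<lambda>n. ereal (A - 2 / real n))
      \<le> liminf (\<lambda>n. ereal (real_of_int (Min_diff (FIFO k) (LRU k) (star_V N) star_E n) / real n))"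
  proof (rule Liminf_mono)
    show "\<forall>\<^sub>F n in sequentially. ereal (A - 2 / real n)
        \<le> ereal (real_of_int (Min_diff (FIFO k) (LRU k) (star_V N) star_E n) / real n)"
      unfolding eventually_sequentially
    proof (intro exI allI impI)
      fix n :: nat assume "1 \<le> n"
      then have np: "real n > 0" by simp
      have "A * real n - 2 \<le> real_of_int (Min_diff (FIFO k) (LRU k) (star_V N) star_E n)"
        using Min_diff_lower[OF assms, of n] unfolding A_def by simp
      then have "(A * real n - 2) / real n \<le> real_of_int (Min_diff (FIFO k) (LRU k) (star_V N) star_E n) / real n"
        using np by (simp add: divide_right_mono)
      moreover have "(A * real n - 2) / real n = A - 2 / real n" using np by (simp add: field_simps)
      ultimately show "ereal (A - 2 / real n) \<le> ereal (real_of_int (Min_diff (FIFO k) (LRU k) (star_V N) star_E n) / real n)"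
        by simp
    qed
  qed
  ultimately show ?thesis unfolding Min_ratio_def A_def by simp
qed



definition ws :: "nat list \<Rightarrow> nat list" where
  "ws xs = concat (map (\<lambda>a. [0, a]) xs)"

lemma ws_simps[simp]: "ws [] = []" "ws (a # xs) = 0 # a # ws xs" "ws (xs @ ys) = ws xs @ ws ys"
  by (simp_all add: ws_def)

lemma ws_set: "x \<in> set (ws xs) \<Longrightarrow> x = 0 \<or> x \<in> set xs"
  by (induction xs) auto

lemma ws_concat_replicate: "ws (concat (replicate n xs)) = concat (replicate n (ws xs))"
  by (induction n) auto

fun lst :: "nat list \<Rightarrow> nat list" where
  "lst [] = [0]"
| "lst (a # X) = a # 0 # X"

lemma lru_pair:
  assumes "distinct D" "0 \<notin> set D" "D \<noteq> []" "length D \<le> k - 1" "a \<noteq> 0" "2 \<le> k"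
  shows "lru_faults k (lst D) (0 # a # rest) = (if a \<in> set D then 0 else 1)
     + lru_faults k (lst (a # (if a \<in> set D then removeAll a D else if length D \<ge> k - 1 then butlast D else D))) rest"
proof -
  obtain b X where D: "D = b # X" using assms(3) by (cases D) auto
  have 1: "lru_faults k (lst D) (0 # a # rest) = lru_faults k (0 # D) (a # rest)"
    using assms(1,2) D by simp
  show ?thesis
  proof (cases "a \<in> set D")
    case True
    then show ?thesis using 1 assms(5) by simp
  next
    case False
    show ?thesis
    proof (cases "length D \<ge> k - 1")
      case True
      then have "k \<le> length (0 # D)" using assms(6) by simp
      moreover have "butlast (0 # D) = 0 # butlast D" using assms(3) by simp
      ultimately show ?thesis using 1 False assms(5) True by simp
    next
      case F2: False
      then have "\<not> k \<le> length (0 # D)" by simp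
      then show ?thesis using 1 False assms(5) F2 by simp
    qed
  qed
qed

lemma lru_P_aux:
  assumes "2 \<le> k"
  shows "1 \<le> j \<Longrightarrow> j < k \<Longrightarrow> lru_faults k (lst [j+1..<k+1]) (ws (rev [2..<j+1]) @ rest)
     = (j - 1) + lru_faults k (lst [2..<k+1]) rest"
proof (induction j)
  case 0 then show ?case by simp
next
  case (Suc j)
  show ?case
  proof (cases "j = 0")
    case True
    have e: "Suc j + 1 = 2" using True by simp
    show ?thesis unfolding e using True by simp
  next
    case False
    have r: "rev [2..<Suc j + 1] = Suc j # rev [2..<j+1]" using False by simp
    have "lru_faults k (lst [Suc j+1..<k+1]) (ws (rev [2..<Suc j + 1]) @ rest)
        = lru_faults k (lst [Suc j+1..<k+1]) (0 # Suc j # (ws (rev [2..<j+1]) @ rest))"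
      unfolding r by simp
    also have "\<dots> = 1 + lru_faults k (lst (Suc j # [Suc j+1..<k+1])) (ws (rev [2..<j+1]) @ rest)"
    proof -
      have ne: "[Suc j+1..<k+1] \<noteq> []" using Suc.prems by simp
      have "lru_faults k (lst [Suc j+1..<k+1]) (0 # Suc j # (ws (rev [2..<j+1]) @ rest))
         = (if Suc j \<in> set [Suc j+1..<k+1] then 0 else 1) + lru_faults k (lst (Suc j # (if Suc j \<in> set [Suc j+1..<k+1] then removeAll (Suc j) [Suc j+1..<k+1] else if length [Suc j+1..<k+1] \<ge> k - 1 then butlast [Suc j+1..<k+1] else [Suc j+1..<k+1]))) (ws (rev [2..<j+1]) @ rest)"
        by (rule lru_pair) (use ne Suc.prems assms False in auto)
      moreover have n1: "Suc j \<notin> set [Suc j+1..<k+1]" by simp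
      moreover have n2: "\<not> (length [Suc j+1..<k+1] \<ge> k - 1)" using False Suc.prems by simp
      ultimately show ?thesis by (simp only: if_False)
    qed
    also have "Suc j # [Suc j+1..<k+1] = [j+1..<k+1]" using Suc.prems by (simp add: upt_conv_Cons)
    also have "lru_faults k (lst [j+1..<k+1]) (ws (rev [2..<j+1]) @ rest) = (j - 1) + lru_faults k (lst [2..<k+1]) rest"
      using Suc.IH Suc.prems False by simp
    finally show ?thesis using False by simp
  qed
qed

lemma lru_P:
  assumes "2 \<le> k"
  shows "lru_faults k [] (ws (rev [2..<k+1]) @ rest) = k + lru_faults k (lst [2..<k+1]) rest"
proof -
  have r: "rev [2..<k+1] = k # rev [2..<k]" using assms by simp
  have "lru_faults k [] (ws (rev [2..<k+1]) @ rest) = 2 + lru_faults k [k, 0] (ws (rev [2..<k-1+1]) @ rest)"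
    unfolding r using assms by simp
  also have "[k, 0] = lst [k-1+1..<k+1]" using assms by simp
  also have "lru_faults k (lst [k-1+1..<k+1]) (ws (rev [2..<k-1+1]) @ rest) = (k - 1 - 1) + lru_faults k (lst [2..<k+1]) rest"
    by (rule lru_P_aux[OF assms]) (use assms in auto)
  finally show ?thesis using assms by simp
qed

lemma lru_Q:
  assumes "2 \<le> k"
  shows "lru_faults k (lst [2..<k+1]) (ws [2..<k+1] @ rest) = lru_faults k (lst (rev [2..<k+1])) rest"
proof -
  have "2 \<le> k + 1" using assms by simp
  have gen: "j \<le> k + 1 \<Longrightarrow> 2 \<le> j \<Longrightarrow> lru_faults k (lst (rev [2..<j] @ [j..<k+1])) (ws [j..<k+1] @ rest) = lru_faults k (lst (rev [2..<k+1])) rest" for j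
  proof (induction rule: inc_induct)
    case base then show ?case by simp
  next
    case (step n)
    have u: "[n..<k+1] = n # [Suc n..<k+1]" using step.hyps step.prems by (simp add: upt_conv_Cons)
    define D where "D = rev [2..<n] @ [n..<k+1]"
    have dD: "distinct D" unfolding D_def by auto
    have 0: "0 \<notin> set D" unfolding D_def using step.hyps step.prems by auto
    have nD: "n \<in> set D" unfolding D_def using step.hyps step.prems by auto
    have ne: "D \<noteq> []" using nD by auto
    have len: "length D \<le> k - 1" unfolding D_def using step.hyps step.prems assms by simp
    have rm: "removeAll n D = rev [2..<n] @ [Suc n..<k+1]" unfolding D_def u by simp
    have "lru_faults k (lst D) (0 # n # (ws [Suc n..<k+1] @ rest))
        = (if n \<in> set D then 0 else 1) + lru_faults k (lst (n # (if n \<in> set D then removeAll n D else if length D \<ge> k - 1 then butlast D else D))) (ws [Suc n..<k+1] @ rest)"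
      by (rule lru_pair[OF dD 0 ne len]) (use step.hyps step.prems assms in auto)
    then have "lru_faults k (lst D) (0 # n # (ws [Suc n..<k+1] @ rest))
        = lru_faults k (lst (rev [2..<Suc n] @ [Suc n..<k+1])) (ws [Suc n..<k+1] @ rest)"
      using nD rm step.hyps step.prems by (simp del: lru_faults.simps)
    then show ?case using step.IH step.prems step.hyps unfolding D_def u by (simp del: lru_faults.simps upt_Suc)
  qed
  show ?thesis using gen[of 2] assms by simp
qed

lemma lru_round:
  assumes "2 \<le> k"
  shows "lru_faults k (lst (rev [2..<k+1])) (ws [1..<k+1] @ rest) = k + lru_faults k (lst (rev [2..<k+1])) rest"
proof -
  have gen: "a \<le> k \<Longrightarrow> 1 \<le> a \<Longrightarrow> lru_faults k (lst (rev [1..<a] @ rev [a+1..<k+1])) (ws [a..<k] @ rest')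
      = (k - a) + lru_faults k (lst (rev [1..<k])) rest'" for a rest'
  proof (induction rule: inc_induct)
    case base then show ?case by simp
  next
    case (step n)
    have u: "[n..<k] = n # [Suc n..<k]" using step.hyps step.prems by (simp add: upt_conv_Cons)
    define D where "D = rev [1..<n] @ rev [n+1..<k+1]"
    have dD: "distinct D" unfolding D_def by auto
    have 0: "0 \<notin> set D" unfolding D_def by auto
    have nD: "n \<notin> set D" unfolding D_def using step.hyps step.prems by auto
    have len: "length D = k - 1" unfolding D_def using step.hyps step.prems assms by simp
    have ne: "D \<noteq> []" using len assms by auto
    have u2: "[n+1..<k+1] = (n+1) # [n+2..<k+1]" using step.hyps step.prems by (simp add: upt_conv_Cons)
    have bl: "butlast D = rev [1..<n] @ rev [n+2..<k+1]"
      unfolding D_def u2 by (simp add: butlast_append)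
    have r1: "rev [1..<Suc n] = n # rev [1..<n]" using step.prems by simp
    have "lru_faults k (lst D) (0 # n # (ws [Suc n..<k] @ rest'))
        = (if n \<in> set D then 0 else 1) + lru_faults k (lst (n # (if n \<in> set D then removeAll n D else if length D \<ge> k - 1 then butlast D else D))) (ws [Suc n..<k] @ rest')"
      by (rule lru_pair[OF dD 0 ne]) (use step.hyps step.prems assms len in auto)
    then have "lru_faults k (lst D) (0 # n # (ws [Suc n..<k] @ rest'))
        = 1 + lru_faults k (lst (rev [1..<Suc n] @ rev [Suc n + 1..<k+1])) (ws [Suc n..<k] @ rest')"
      using nD len bl step.hyps step.prems r1 by (simp del: lru_faults.simps upt_Suc)
    then show ?case using step.IH step.hyps step.prems unfolding D_def u by (simp del: lru_faults.simps upt_Suc)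
  qed
  have A: "lru_faults k (lst (rev [2..<k+1])) (ws [1..<k] @ rest')
      = (k - 1) + lru_faults k (lst (rev [1..<k])) rest'" for rest'
    using gen[of 1 rest'] assms by (simp add: numeral_2_eq_2)
  have B: "lru_faults k (lst (rev [1..<k])) (0 # k # rest) = 1 + lru_faults k (lst (rev [2..<k+1])) rest"
  proof -
    define D where "D = rev [1..<k]"
    have dD: "distinct D" unfolding D_def by auto
    have 0: "0 \<notin> set D" unfolding D_def by auto
    have nD: "k \<notin> set D" unfolding D_def by auto
    have len: "length D = k - 1" unfolding D_def by simp
    have ne: "D \<noteq> []" using len assms by auto
    have u2: "[1..<k] = 1 # [2..<k]" using assms by (simp add: upt_conv_Cons numeral_2_eq_2)
    have bl: "k # butlast D = rev [2..<k+1]" unfolding D_def u2 using assms by (simp add: butlast_append)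
    have "lru_faults k (lst D) (0 # k # rest)
        = (if k \<in> set D then 0 else 1) + lru_faults k (lst (k # (if k \<in> set D then removeAll k D else if length D \<ge> k - 1 then butlast D else D))) rest"
      by (rule lru_pair[OF dD 0 ne]) (use assms len in auto)
    then show ?thesis using nD len bl unfolding D_def using assms by (simp del: lru_faults.simps add: numeral_2_eq_2)
  qed
  have ws: "ws [1..<k+1] = ws [1..<k] @ [0, k]" using assms by simp
  show ?thesis unfolding ws using A[of "0 # k # rest"] B assms by (simp del: lru_faults.simps)
qed

lemma lru_rounds:
  assumes "2 \<le> k"
  shows "lru_faults k (lst (rev [2..<k+1])) (concat (replicate M (ws [1..<k+1]))) = k * M"
proof (induction M)
  case 0 then show ?case by simp
next
  case (Suc M)
  then show ?case using lru_round[OF assms, of "concat (replicate M (ws [1..<k+1]))"] by simp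
qed



lemma fifo_P:
  assumes "2 \<le> k"
  shows "fifo_faults k [] (ws (rev [2..<k+1]) @ rest) = k + fifo_faults k ([2..<k+1] @ [0]) rest"
proof -
  have gen: "1 \<le> j \<Longrightarrow> j < k \<Longrightarrow> fifo_faults k ([j+1..<k+1] @ [0]) (ws (rev [2..<j+1]) @ rest)
     = (j - 1) + fifo_faults k ([2..<k+1] @ [0]) rest" for j
  proof (induction j)
    case 0 then show ?case by simp
  next
    case (Suc j)
    show ?case
    proof (cases "j = 0")
      case True
      have e: "Suc j + 1 = 2" using True by simp
      show ?thesis unfolding e using True by simp
    next
      case False
      have r: "rev [2..<Suc j + 1] = Suc j # rev [2..<j+1]" using False by simp
      have n1: "Suc j \<notin> set ([Suc j+1..<k+1] @ [0])" by simp
      have n2: "\<not> (length ([Suc j+1..<k+1] @ [0]) \<ge> k)" using False Suc.prems by simp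
      have u: "Suc j # [Suc j+1..<k+1] = [j+1..<k+1]" using Suc.prems by (simp add: upt_conv_Cons)
      have "fifo_faults k ([Suc j+1..<k+1] @ [0]) (ws (rev [2..<Suc j + 1]) @ rest)
          = 1 + fifo_faults k ([j+1..<k+1] @ [0]) (ws (rev [2..<j+1]) @ rest)"
        unfolding r using n1 n2 u[symmetric] by (simp del: upt_Suc)
      then show ?thesis using Suc.IH Suc.prems False by simp
    qed
  qed
  have r: "rev [2..<k+1] = k # rev [2..<k-1+1]" using assms by simp
  have "fifo_faults k [] (ws (rev [2..<k+1]) @ rest) = 2 + fifo_faults k ([k-1+1..<k+1] @ [0]) (ws (rev [2..<k-1+1]) @ rest)"
    unfolding r using assms by simp
  also have "fifo_faults k ([k-1+1..<k+1] @ [0]) (ws (rev [2..<k-1+1]) @ rest) = (k - 1 - 1) + fifo_faults k ([2..<k+1] @ [0]) rest"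
    by (rule gen) (use assms in auto)
  finally show ?thesis using assms by simp
qed

fun cnt :: "nat \<Rightarrow> nat \<Rightarrow> nat list \<Rightarrow> nat" where
  "cnt k m [] = 0"
| "cnt k m (p # ps) = (if p = m then Suc (cnt k ((m + k) mod (k + 1)) ps) else cnt k m ps)"

lemma cnt_skip: "m \<notin> set xs \<Longrightarrow> cnt k m (xs @ ys) = cnt k m ys"
  by (induction xs) auto

lemma nextm:
  fixes m k :: nat
  assumes "m \<le> k"
  shows "(m + k) mod (k + 1) = (if m = 0 then k else m - 1)"
proof (cases "m = 0")
  case True then show ?thesis by simp
next
  case False
  then have "m + k = (m - 1) + (k + 1)" by simp
  then have "(m + k) mod (k + 1) = ((m - 1) + (k + 1)) mod (k + 1)" by simp
  also have "\<dots> = (m - 1) mod (k + 1)" by (rule mod_add_self2)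
  also have "\<dots> = m - 1" using assms by simp
  finally show ?thesis using False by simp
qed

definition C :: "nat \<Rightarrow> nat \<Rightarrow> nat list" where
  "C k a = map (\<lambda>i. (a + i) mod (k + 1)) [0..<k]"

lemma ginv: fixes a m i :: nat shows "a < m \<Longrightarrow> ((a + i) mod m + (m - a)) mod m = i mod m"
proof -
  assume "a < m"
  have "((a + i) mod m + (m - a)) mod m = (a + i + (m - a)) mod m" by (rule mod_add_left_eq)
  also have "a + i + (m - a) = i + m" using \<open>a < m\<close> by simp
  finally show ?thesis by simp
qed

lemma C_set:
  assumes "a \<le> k" "p \<le> k"
  shows "p \<in> set (C k a) \<longleftrightarrow> p \<noteq> (a + k) mod (k + 1)"
proof
  assume "p \<in> set (C k a)"
  then obtain i where i: "i < k" "p = (a + i) mod (k + 1)" unfolding C_def by auto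
  show "p \<noteq> (a + k) mod (k + 1)"
  proof
    assume h: "p = (a + k) mod (k + 1)"
    have "((a + i) mod (k+1) + (k + 1 - a)) mod (k+1) = i mod (k+1)" using assms by (intro ginv) simp
    moreover have "((a + k) mod (k+1) + (k + 1 - a)) mod (k+1) = k mod (k+1)" using assms by (intro ginv) simp
    ultimately have "i mod (k+1) = k mod (k+1)" using i h by simp
    then show False using i by simp
  qed
next
  assume h: "p \<noteq> (a + k) mod (k + 1)"
  define i where "i = (p + (k + 1 - a)) mod (k + 1)"
  have "(a + i) mod (k + 1) = (a + (p + (k + 1 - a))) mod (k + 1)" unfolding i_def by (simp add: mod_add_right_eq)
  also have "a + (p + (k + 1 - a)) = p + (k + 1)" using assms by simp
  also have "(p + (k + 1)) mod (k + 1) = p mod (k + 1)" by (rule mod_add_self2)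
  also have "p mod (k + 1) = p" using assms(2) by simp
  finally have e: "(a + i) mod (k + 1) = p" .
  have "i < k + 1" unfolding i_def by simp
  moreover have "i \<noteq> k" using e h by auto
  ultimately have "i < k" by simp
  then show "p \<in> set (C k a)" unfolding C_def using e by force
qed

lemma C_next:
  assumes "a \<le> k" "1 \<le> k"
  shows "((a + k) mod (k + 1)) # butlast (C k a) = C k ((a + k) mod (k + 1))"
proof -
  define p where "p = (a + k) mod (k + 1)"
  have pk: "p \<le> k" unfolding p_def by (simp add: less_Suc_eq_le)
  have u: "[0..<k] = 0 # map Suc [0..<k-1]" using assms by (simp add: upt_conv_Cons map_Suc_upt)
  have u2: "[0..<k] = [0..<k-1] @ [k-1]" using assms
    by (metis Suc_diff_1 less_le_trans upt_Suc_append zero_le zero_less_one)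
  have "butlast (C k a) = map (\<lambda>i. (a + i) mod (k + 1)) [0..<k-1]"
    unfolding C_def u2 by simp
  moreover have "C k p = p # map (\<lambda>i. (p + Suc i) mod (k + 1)) [0..<k-1]"
    unfolding C_def u using pk by simp
  moreover have "(p + Suc i) mod (k + 1) = (a + i) mod (k + 1)" for i
  proof -
    have "(p + Suc i) mod (k + 1) = (a + k + Suc i) mod (k + 1)" unfolding p_def by (rule mod_add_left_eq)
    also have "a + k + Suc i = (a + i) + (k + 1)" by simp
    also have "((a + i) + (k + 1)) mod (k + 1) = (a + i) mod (k + 1)" by (rule mod_add_self2)
    finally show ?thesis .
  qed
  ultimately show ?thesis unfolding p_def[symmetric] by simp
qed

lemma fifo_cnt:
  assumes "1 \<le> k"
  shows "a \<le> k \<Longrightarrow> set I \<subseteq> {..k} \<Longrightarrow> fifo_faults k (C k a) I = cnt k ((a + k) mod (k + 1)) I"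
proof (induction I arbitrary: a)
  case Nil then show ?case by simp
next
  case (Cons p ps)
  have pk: "p \<le> k" using Cons.prems by simp
  have ps: "set ps \<subseteq> {..k}" using Cons.prems by simp
  show ?case
  proof (cases "p = (a + k) mod (k + 1)")
    case True
    have nin: "p \<notin> set (C k a)" using C_set[OF Cons.prems(1) pk] True by simp
    have len: "length (C k a) = k" unfolding C_def by simp
    have "fifo_faults k (C k a) (p # ps) = Suc (fifo_faults k (C k p) ps)"
      using nin len C_next[OF Cons.prems(1) assms] True by simp
    also have "\<dots> = Suc (cnt k ((p + k) mod (k + 1)) ps)" using Cons.IH[OF pk ps] by simp
    finally show ?thesis using True by simp
  next
    case False
    have "p \<in> set (C k a)" using C_set[OF Cons.prems(1) pk] False by simp
    then show ?thesis using False Cons.IH[OF Cons.prems(1) ps] by simp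
  qed
qed

lemma C2: "2 \<le> k \<Longrightarrow> C k 2 = [2..<k+1] @ [0]"
proof -
  assume k: "2 \<le> k"
  have u2: "[0..<k] = [0..<k-1] @ [k-1]" using k
    by (metis Suc_diff_1 less_le_trans upt_Suc_append zero_le zero_less_one pos2)
  have "map (\<lambda>i. (2 + i) mod (k + 1)) [0..<k-1] = map (\<lambda>i. i + 2) [0..<k-1]"
    by (rule map_cong) auto
  also have "\<dots> = [2..<k-1+2]" by (rule map_add_upt)
  also have "k - 1 + 2 = k + 1" using k by simp
  finally show ?thesis unfolding C_def u2 using k by simp
qed



lemma R1:
  assumes "2 \<le> j" "j \<le> k"
  shows "cnt k j (ws [1..<k+1] @ rest) = 1 + cnt k (j - 1) rest"
proof -
  have u0: "[1..<j + (k + 1 - j)] = [1..<j] @ [j..<j + (k + 1 - j)]"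
    by (rule upt_add_eq_append) (use assms in simp)
  have e: "j + (k + 1 - j) = k + 1" using assms by simp
  have u1: "[j..<k+1] = j # [Suc j..<k+1]" by (rule upt_conv_Cons) (use assms in simp)
  have u: "[1..<k+1] = [1..<j] @ j # [Suc j..<k+1]" using u0 u1 unfolding e by simp
  have s1: "j \<notin> set (ws [1..<j])" using ws_set assms by fastforce
  have s2: "j - 1 \<notin> set (ws [Suc j..<k+1])" using ws_set assms by fastforce
  have nm: "(j + k) mod (k + 1) = j - 1" using nextm[of j k] assms by simp
  have "cnt k j (ws [1..<k+1] @ rest) = cnt k j (ws [1..<j] @ (0 # j # (ws [Suc j..<k+1] @ rest)))"
    unfolding u by simp
  also have "\<dots> = cnt k j (0 # j # (ws [Suc j..<k+1] @ rest))" by (rule cnt_skip[OF s1])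
  also have "\<dots> = Suc (cnt k (j - 1) (ws [Suc j..<k+1] @ rest))" using assms nm by simp
  also have "cnt k (j - 1) (ws [Suc j..<k+1] @ rest) = cnt k (j - 1) rest" by (rule cnt_skip[OF s2])
  finally show ?thesis by simp
qed

lemma Z:
  assumes "1 \<le> k" "\<forall>x\<in>set xs. x \<noteq> 0 \<and> x \<noteq> k"
  shows "cnt k 0 (ws xs @ 0 # k # rest) = 2 + cnt k (k - 1) rest"
proof -
  have n0: "(0 + k) mod (k + 1) = k" using nextm[of 0 k] by simp
  have nk: "(k + k) mod (k + 1) = k - 1" using nextm[of k k] assms by simp
  show ?thesis
  proof (cases xs)
    case Nil
    then show ?thesis using n0 nk assms by simp
  next
    case (Cons a xs')
    have s: "k \<notin> set (a # ws xs')" using assms Cons ws_set by fastforce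
    have "cnt k 0 (ws xs @ 0 # k # rest) = Suc (cnt k k ((a # ws xs') @ 0 # k # rest))"
      using Cons n0 by simp
    also have "cnt k k ((a # ws xs') @ 0 # k # rest) = cnt k k (0 # k # rest)" by (rule cnt_skip[OF s])
    also have "\<dots> = Suc (cnt k (k - 1) rest)" using nk assms by simp
    finally show ?thesis by simp
  qed
qed

lemma R2:
  assumes "2 \<le> k"
  shows "cnt k 1 (ws [1..<k+1] @ rest) = 3 + cnt k (k - 1) rest"
proof -
  have u: "[1..<k+1] = 1 # [2..<k] @ [k]" using assms by (simp add: upt_conv_Cons numeral_2_eq_2)
  have n1: "(1 + k) mod (k + 1) = 0" by simp
  have "cnt k 1 (ws [1..<k+1] @ rest) = Suc (cnt k 0 (ws [2..<k] @ 0 # k # rest))"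
    unfolding u using n1 by simp
  also have "cnt k 0 (ws [2..<k] @ 0 # k # rest) = 2 + cnt k (k - 1) rest"
    by (rule Z) (use assms in auto)
  finally show ?thesis by simp
qed

lemma R3:
  assumes "2 \<le> k"
  shows "1 \<le> j \<Longrightarrow> j \<le> k - 1 \<Longrightarrow> cnt k j (concat (replicate j (ws [1..<k+1])) @ rest) = (j + 2) + cnt k (k - 1) rest"
proof (induction j)
  case 0 then show ?case by simp
next
  case (Suc j)
  show ?case
  proof (cases "j = 0")
    case True then show ?thesis using R2[OF assms, of rest] by simp
  next
    case False
    define X where "X = ws [1..<k+1]"
    define R where "R = concat (replicate j X) @ rest"
    have e1: "concat (replicate (Suc j) X) @ rest = X @ R" unfolding R_def by simp
    have r1: "cnt k (Suc j) (X @ R) = 1 + cnt k (Suc j - 1) R"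
      unfolding X_def by (rule R1) (use False Suc.prems in auto)
    have ih: "cnt k j R = (j + 2) + cnt k (k - 1) rest"
      unfolding R_def X_def by (rule Suc.IH) (use False Suc.prems in auto)
    have "cnt k (Suc j) (concat (replicate (Suc j) X) @ rest) = (Suc j + 2) + cnt k (k - 1) rest"
      unfolding e1 r1 using ih by simp
    then show ?thesis unfolding X_def .
  qed
qed

lemma R4:
  assumes "2 \<le> k"
  shows "cnt k (k - 1) (concat (replicate (t * (k - 1)) (ws [1..<k+1]))) = t * (k + 1)"
proof (induction t)
  case 0 then show ?case by simp
next
  case (Suc t)
  have "replicate (Suc t * (k - 1)) (ws [1..<k+1]) = replicate (k - 1) (ws [1..<k+1]) @ replicate (t * (k - 1)) (ws [1..<k+1])"
    by (simp add: replicate_add)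
  then have "cnt k (k - 1) (concat (replicate (Suc t * (k - 1)) (ws [1..<k+1])))
      = cnt k (k - 1) (concat (replicate (k - 1) (ws [1..<k+1])) @ concat (replicate (t * (k - 1)) (ws [1..<k+1])))"
    by simp
  also have "\<dots> = (k - 1 + 2) + cnt k (k - 1) (concat (replicate (t * (k - 1)) (ws [1..<k+1])))"
    by (rule R3[OF assms]) (use assms in auto)
  finally show ?case using Suc.IH assms by simp
qed



lemma in_LG_ConsI:
  assumes "x \<in> V" "x = y \<or> E x y" "in_LG V E (y # zs)"
  shows "in_LG V E (x # y # zs)"
  unfolding in_LG_def
proof (intro conjI allI impI)
  show "set (x # y # zs) \<subseteq> V" using assms unfolding in_LG_def by auto
  fix i assume i: "Suc i < length (x # y # zs)"
  show "(x # y # zs) ! i = (x # y # zs) ! Suc i \<or> E ((x # y # zs) ! i) ((x # y # zs) ! Suc i)"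
  proof (cases i)
    case 0 then show ?thesis using assms(2) by simp
  next
    case (Suc i')
    have "Suc i' < length (y # zs)" using i Suc by simp
    then show ?thesis using assms(3) Suc unfolding in_LG_def by simp
  qed
qed

lemma in_LG_single: "x \<in> V \<Longrightarrow> in_LG V E [x]"
  unfolding in_LG_def by simp

lemma ws_LG:
  "(\<forall>a\<in>set xs. 1 \<le> a \<and> a < N) \<Longrightarrow> xs \<noteq> [] \<Longrightarrow> in_LG (star_V N) star_E (ws xs)"
proof (induction xs)
  case Nil then show ?case by simp
next
  case (Cons a xs)
  have a: "1 \<le> a" "a < N" using Cons.prems by auto
  have 0: "0 \<in> star_V N" using a unfolding star_V_def by simp
  have aV: "a \<in> star_V N" using a unfolding star_V_def by simp
  have e0a: "star_E 0 a" using a unfolding star_E_def by simp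
  have ea0: "star_E a 0" using a unfolding star_E_def by simp
  have "in_LG (star_V N) star_E (a # ws xs)"
  proof (cases xs)
    case Nil then show ?thesis using in_LG_single[OF aV] by simp
  next
    case (Cons b xs')
    have "in_LG (star_V N) star_E (ws xs)" using Cons.IH Cons.prems \<open>xs = b # xs'\<close> by simp
    then have "in_LG (star_V N) star_E (0 # b # ws xs')" using \<open>xs = b # xs'\<close> by simp
    then show ?thesis using in_LG_ConsI[OF aV _ ] ea0 \<open>xs = b # xs'\<close> by simp
  qed
  then show ?case using in_LG_ConsI[OF 0] e0a by simp
qed

definition xsq :: "nat \<Rightarrow> nat \<Rightarrow> nat list" where
  "xsq k t = rev [2..<k+1] @ [2..<k+1] @ concat (replicate (Suc (t * (k - 1))) [1..<k+1])"

lemma ws_xsq: "ws (xsq k t) = ws (rev [2..<k+1]) @ ws [2..<k+1] @ concat (replicate (Suc (t * (k - 1))) (ws [1..<k+1]))"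
  unfolding xsq_def by (simp add: ws_concat_replicate)

lemma LRU_xsq:
  assumes "2 \<le> k"
  shows "LRU k (ws (xsq k t)) = k + k * Suc (t * (k - 1))"
proof -
  have "LRU k (ws (xsq k t)) = k + lru_faults k (lst [2..<k+1]) (ws [2..<k+1] @ concat (replicate (Suc (t * (k - 1))) (ws [1..<k+1])))"
    unfolding LRU_def ws_xsq using lru_P[OF assms] by (simp del: lru_faults.simps)
  also have "lru_faults k (lst [2..<k+1]) (ws [2..<k+1] @ concat (replicate (Suc (t * (k - 1))) (ws [1..<k+1])))
      = lru_faults k (lst (rev [2..<k+1])) (concat (replicate (Suc (t * (k - 1))) (ws [1..<k+1])))"
    by (rule lru_Q[OF assms])
  also have "\<dots> = k * Suc (t * (k - 1))" by (rule lru_rounds[OF assms])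
  finally show ?thesis .
qed

lemma FIFO_xsq:
  assumes "2 \<le> k"
  shows "FIFO k (ws (xsq k t)) = k + 3 + t * (k + 1)"
proof -
  define R where "R = concat (replicate (t * (k - 1)) (ws [1..<k+1]))"
  have sR: "set (ws [2..<k+1] @ ws [1..<k+1] @ R) \<subseteq> {..k}"
    unfolding R_def by (auto dest!: ws_set)
  have "FIFO k (ws (xsq k t)) = k + fifo_faults k ([2..<k+1] @ [0]) (ws [2..<k+1] @ ws [1..<k+1] @ R)"
    unfolding FIFO_def ws_xsq R_def using fifo_P[OF assms] by (simp del: fifo_faults.simps)
  also have "[2..<k+1] @ [0] = C k 2" using C2[OF assms] by simp
  also have "fifo_faults k (C k 2) (ws [2..<k+1] @ ws [1..<k+1] @ R) = cnt k ((2 + k) mod (k + 1)) (ws [2..<k+1] @ ws [1..<k+1] @ R)"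
    by (rule fifo_cnt) (use assms sR in auto)
  also have "(2 + k) mod (k + 1) = 1" using nextm[of 2 k] assms by simp
  also have "cnt k 1 (ws [2..<k+1] @ ws [1..<k+1] @ R) = cnt k 1 (ws [1..<k+1] @ R)"
    by (rule cnt_skip) (auto dest!: ws_set)
  also have "\<dots> = 3 + cnt k (k - 1) R" by (rule R2[OF assms])
  also have "cnt k (k - 1) R = t * (k + 1)" unfolding R_def by (rule R4[OF assms])
  finally show ?thesis by simp
qed

lemma len_xsq: assumes "2 \<le> k" shows "length (ws (xsq k t)) = 2 * ((k - 1) + (k - 1) + k * Suc (t * (k - 1)))"
proof -
  have "length (ws xs) = 2 * length xs" for xs by (induction xs) auto
  moreover have "length (concat (replicate n [1..<k+1])) = n * k" for n by (induction n) auto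
  moreover obtain m where m: "k = m + 2" using assms le_Suc_ex by (metis add.commute)
  ultimately show ?thesis unfolding xsq_def m by (simp add: algebra_simps)
qed

lemma xsq_LG:
  assumes "2 \<le> k" "k + 1 \<le> N"
  shows "in_LG (star_V N) star_E (ws (xsq k t))"
proof (rule ws_LG)
  show "\<forall>a\<in>set (xsq k t). 1 \<le> a \<and> a < N" using assms unfolding xsq_def by auto
  show "xsq k t \<noteq> []" using assms unfolding xsq_def by simp
qed



lemma lin_ratio:
  fixes a b c d :: real
  assumes "d > 0" "c > 0"
  shows "(\<lambda>t::nat. (a + b * real t) / (c + d * real t)) \<longlonglongrightarrow> b / d"
proof -
  have lim_top: "filterlim (\<lambda>t::nat. c + d * real t) at_top sequentially"
  proof -
    have "filterlim (\<lambda>t::nat. d * real t) at_top sequentially"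
      by (rule filterlim_tendsto_pos_mult_at_top[OF tendsto_const assms(1) filterlim_real_sequentially])
    then show ?thesis by (rule filterlim_tendsto_add_at_top[OF tendsto_const])
  qed
  have "(\<lambda>t::nat. (a - b * c / d) / (c + d * real t)) \<longlonglongrightarrow> 0"
    by (rule tendsto_divide_0[OF tendsto_const filterlim_at_top_imp_at_infinity[OF lim_top]])
  then have "(\<lambda>t::nat. b / d + (a - b * c / d) / (c + d * real t)) \<longlonglongrightarrow> b / d + 0"
    by (intro tendsto_add tendsto_const)
  moreover have "b / d + (a - b * c / d) / (c + d * real t) = (a + b * real t) / (c + d * real t)" for t
  proof -
    have pos: "c + d * real t > 0" using assms by (simp add: add_pos_nonneg)
    then have n1: "c + d * real t \<noteq> 0" by simp
    have n2: "d \<noteq> 0" using assms(1) by simp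
    have h1: "(b / d + (a - b * c / d) / (c + d * real t)) * (c + d * real t)
        = b / d * (c + d * real t) + (a - b * c / d)"
      using n1 by (simp add: distrib_right)
    have h2: "b / d * (c + d * real t) = b * c / d + b * real t"
      using n2 by (simp add: distrib_left)
    have "(b / d + (a - b * c / d) / (c + d * real t)) * (c + d * real t) = a + b * real t"
      unfolding h1 h2 by simp
    then show ?thesis using n1 by (simp add: eq_divide_eq)
  qed
  ultimately show ?thesis by simp
qed

lemma ratio_upper:
  assumes k2: "2 \<le> k" and kN: "k + 1 \<le> N"
  shows "Min_ratio (FIFO k) (LRU k) (star_V N) star_E
           \<le> ereal (- 1/2 + 1 / (2 * (real k - 1)) + 1 / (2 * real k * (real k - 1)))"
proof -
  obtain m where m: "k = m + 2" using k2 le_Suc_ex by (metis add.commute)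
  define K where "K = real k"
  have K2: "K \<ge> 2" unfolding K_def using k2 by simp
  define f where "f n = ereal (real_of_int (Min_diff (FIFO k) (LRU k) (star_V N) star_E n) / real n)" for n
  define s where "s t = length (ws (xsq k t))" for t
  define a where "a = 3 - K"
  define b where "b = (K + 1) - K * (K - 1)"
  define c where "c = 4 * (K - 1) + 2 * K"
  define d where "d = 2 * K * (K - 1)"
  have dpos: "d > 0" unfolding d_def using K2 by simp
  have cpos: "c > 0" unfolding c_def using K2 by simp
  have sr: "real (s t) = c + d * real t" for t
  proof -
    have "s t = 2 * ((k - 1) + (k - 1) + k * Suc (t * (k - 1)))" unfolding s_def by (rule len_xsq[OF k2])
    then have "s t = 2 * ((m + 1) + (m + 1) + (m + 2) * Suc (t * (m + 1)))" using m by simp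
    then have "real (s t) = 2 * ((real m + 1) + (real m + 1) + (real m + 2) * (1 + real t * (real m + 1)))"
      by (simp add: algebra_simps)
    then show ?thesis unfolding c_def d_def K_def m by (simp add: algebra_simps)
  qed
  have dr: "real_of_int (int (FIFO k (ws (xsq k t))) - int (LRU k (ws (xsq k t)))) = a + b * real t" for t
  proof -
    have "FIFO k (ws (xsq k t)) = (m + 2) + 3 + t * (m + 3)" using FIFO_xsq[OF k2, of t] m by (simp add: algebra_simps)
    moreover have "LRU k (ws (xsq k t)) = (m + 2) + (m + 2) * Suc (t * (m + 1))" using LRU_xsq[OF k2, of t] m by simp
    ultimately have "real_of_int (int (FIFO k (ws (xsq k t))) - int (LRU k (ws (xsq k t))))
       = (real m + 5 + real t * (real m + 3)) - ((real m + 2) + (real m + 2) * (1 + real t * (real m + 1)))"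
      by (simp add: algebra_simps)
    then show ?thesis unfolding a_def b_def K_def m by (simp add: algebra_simps)
  qed
  have smono: "strict_mono s"
  proof (rule strict_monoI_Suc)
    fix t
    have "real (s t) < real (s (Suc t))" unfolding sr using dpos by simp
    then show "s t < s (Suc t)" by simp
  qed
  have fs: "(f \<circ> s) t \<le> ereal ((a + b * real t) / (c + d * real t))" for t
  proof -
    let ?S = "{int (FIFO k I) - int (LRU k I) | I. in_LG (star_V N) star_E I \<and> length I = s t}"
    have fin: "finite ?S" using finite_LG_set[of "star_V N"] by (simp add: star_V_def)
    have mem: "int (FIFO k (ws (xsq k t))) - int (LRU k (ws (xsq k t))) \<in> ?S"
      using xsq_LG[OF k2 kN, of t] unfolding s_def by blast
    have "Min_diff (FIFO k) (LRU k) (star_V N) star_E (s t) \<le> int (FIFO k (ws (xsq k t))) - int (LRU k (ws (xsq k t)))"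
      unfolding Min_diff_def using fin mem by (rule Min_le)
    then have le: "real_of_int (Min_diff (FIFO k) (LRU k) (star_V N) star_E (s t)) \<le> a + b * real t"
      using dr[of t] by (metis of_int_le_iff)
    have pos: "real (s t) > 0" unfolding sr using cpos dpos by (simp add: add_pos_nonneg)
    have "real_of_int (Min_diff (FIFO k) (LRU k) (star_V N) star_E (s t)) / real (s t) \<le> (a + b * real t) / real (s t)"
      using le pos by (simp add: divide_right_mono)
    then show ?thesis unfolding f_def comp_def sr by simp
  qed
  have "liminf f \<le> liminf (f \<circ> s)" by (rule liminf_subseq_mono[OF smono])
  also have "\<dots> \<le> liminf (\<lambda>t. ereal ((a + b * real t) / (c + d * real t)))"
    by (rule Liminf_mono) (use fs in simp)
  also have "\<dots> = ereal (b / d)"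
    by (rule lim_imp_Liminf) (simp_all add: lin_ratio[OF dpos cpos])
  also have "b / d = - 1/2 + 1 / (2 * (real k - 1)) + 1 / (2 * real k * (real k - 1))"
  proof -
    have k1: "K - 1 \<noteq> 0" "K \<noteq> 0" using K2 by auto
    have dn: "2 * K * (K - 1) \<noteq> 0" using k1 by simp
    have t1: "1 / (2 * (K - 1)) * (2 * K * (K - 1)) = K" using k1 by (simp add: field_simps)
    have t2: "1 / (2 * K * (K - 1)) * (2 * K * (K - 1)) = 1" using dn by simp
    have t3: "(- 1 / 2) * (2 * K * (K - 1)) = - (K * (K - 1))" by simp
    have "(- 1/2 + 1 / (2 * (K - 1)) + 1 / (2 * K * (K - 1))) * (2 * K * (K - 1)) = (K + 1) - K * (K - 1)"
      unfolding distrib_right t1 t2 t3 by simp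
    then have "- 1/2 + 1 / (2 * (K - 1)) + 1 / (2 * K * (K - 1)) = ((K + 1) - K * (K - 1)) / (2 * K * (K - 1))"
      using dn by (simp add: eq_divide_eq)
    then have "b / d = - 1/2 + 1 / (2 * (K - 1)) + 1 / (2 * K * (K - 1))"
      unfolding b_def d_def by simp
    then show ?thesis unfolding K_def .
  qed
  finally show ?thesis unfolding Min_ratio_def f_def by simp
qed

theorem lemma8:
  fixes k N :: nat
  assumes "k \<ge> 2" and "N \<ge> k + 1"
  shows "ereal (- 1/2 + 1 / (2 * (real k - 1)))
           \<le> Min_ratio (FIFO k) (LRU k) (star_V N) star_E
       \<and> Min_ratio (FIFO k) (LRU k) (star_V N) star_E
           \<le> ereal (- 1/2 + 1 / (2 * (real k - 1)) + 1 / (2 * real k * (real k - 1)))"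
proof
  show "ereal (- 1/2 + 1 / (2 * (real k - 1))) \<le> Min_ratio (FIFO k) (LRU k) (star_V N) star_E"
    by (rule ratio_lower) (use assms in auto)
  show "Min_ratio (FIFO k) (LRU k) (star_V N) star_E
           \<le> ereal (- 1/2 + 1 / (2 * (real k - 1)) + 1 / (2 * real k * (real k - 1)))"
    by (rule ratio_upper) (use assms in auto)
qed


end
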